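(* Let $p\neq 2$ be a prime and $G=Z_{p^{\lambda_1}}\times\cdots\times Z_{p^{\lambda_n}}$ with $0<\lambda_1<\cdots<\lambda_n$. For a canonical tuple $\mathbf a$, the subgroup $R(\mathbf a)$ is a join-irreducible element of $\mathrm{Char}(G)$ if and only if $\mathbf a$ has precisely one nondegenerate coordinate.
   Context: $\mathrm{Char}(G)$ is the lattice of characteristic subgroups of $G$; an element of a finite lattice is join-irreducible if it is not the bottom element and is not the join of two elements each strictly below it. Set $\lambda_0=0$ and $a_0=0$. Tuples are ordered componentwise; for $\mathbf 0\le\mathbf a\le(\lambda_1,\dots,\lambda_n)$, $T(\mathbf a)$ is the set of $(g_1,\dots,g_n)\in G$ with $|g_i|=p^{a_i}$, and $R(\mathbf a)=\bigcup_{\mathbf b\le\mathbf a}T(\mathbf b)$. $\mathbf a$ is canonical if (I) $a_i\ge a_{i-1}$ for $i\in\{2,\dots,n\}$ and (II) $a_{i+1}-a_i\le\lambda_{i+1}-\lambda_i$ for $i\in\{1,\dots,n-1\}$; then $R(\mathbf a)$ is characteristic. A canonical $\mathbf a$ is degenerate at coordinate $i$ if $a_i=a_{i-1}$, or ($i\le n-1$ and) $a_{i+1}-a_i=\lambda_{i+1}-\lambda_i$; otherwise $i$ is nondegenerate. *)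

theory Defs
  imports "HOL-Algebra.Algebra"
begin

text \<open>Convention lambda_0 = 0, a_0 = 0: coordinate 0 of any index function is read as 0.\<close>
definition ext0 :: "(nat \<Rightarrow> nat) \<Rightarrow> nat \<Rightarrow> nat" where
  "ext0 f i = (if i = 0 then 0 else f i)"

definition Gp :: "nat \<Rightarrow> (nat \<Rightarrow> nat) \<Rightarrow> nat \<Rightarrow> (nat \<Rightarrow> int) monoid" where
  "Gp p lam n = product_group {1..n} (\<lambda>i. integer_mod_group (p ^ lam i))"

definition Tset :: "nat \<Rightarrow> (nat \<Rightarrow> nat) \<Rightarrow> nat \<Rightarrow> (nat \<Rightarrow> nat) \<Rightarrow> (nat \<Rightarrow> int) set" where
  "Tset p lam n a = {g \<in> carrier (Gp p lam n).
      \<forall>i\<in>{1..n}. group.ord (integer_mod_group (p ^ lam i)) (g i) = p ^ a i}"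

definition Rset :: "nat \<Rightarrow> (nat \<Rightarrow> nat) \<Rightarrow> nat \<Rightarrow> (nat \<Rightarrow> nat) \<Rightarrow> (nat \<Rightarrow> int) set" where
  "Rset p lam n a = (\<Union>b \<in> {b. \<forall>i\<in>{1..n}. b i \<le> a i}. Tset p lam n b)"

definition canonical :: "(nat \<Rightarrow> nat) \<Rightarrow> nat \<Rightarrow> (nat \<Rightarrow> nat) \<Rightarrow> bool" where
  "canonical lam n a \<longleftrightarrow>
     (\<forall>i\<in>{1..n}. a i \<le> lam i) \<and>
     (\<forall>i\<in>{2..n}. a i \<ge> a (i - 1)) \<and>
     (\<forall>i\<in>{1..n-1}. int (a (i + 1)) - int (a i) \<le> int (lam (i + 1)) - int (lam i))"

definition degenerate_at :: "(nat \<Rightarrow> nat) \<Rightarrow> nat \<Rightarrow> (nat \<Rightarrow> nat) \<Rightarrow> nat \<Rightarrow> bool" where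
  "degenerate_at lam n a i \<longleftrightarrow>
     ext0 a i = ext0 a (i - 1) \<or>
     (i \<le> n - 1 \<and> int (a (i + 1)) - int (a i) = int (lam (i + 1)) - int (lam i))"

definition nondegenerate_at :: "(nat \<Rightarrow> nat) \<Rightarrow> nat \<Rightarrow> (nat \<Rightarrow> nat) \<Rightarrow> nat \<Rightarrow> bool" where
  "nondegenerate_at lam n a i \<longleftrightarrow> i \<in> {1..n} \<and> \<not> degenerate_at lam n a i"

definition char_subgroups :: "('a, 'b) monoid_scheme \<Rightarrow> 'a set set" where
  "char_subgroups G = {H. subgroup H G \<and> (\<forall>f \<in> iso G G. f ` H = H)}"

definition is_join_in :: "'a set set \<Rightarrow> 'a set \<Rightarrow> 'a set \<Rightarrow> 'a set \<Rightarrow> bool" where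
  "is_join_in L y z x \<longleftrightarrow> x \<in> L \<and> y \<subseteq> x \<and> z \<subseteq> x \<and>
     (\<forall>w\<in>L. y \<subseteq> w \<and> z \<subseteq> w \<longrightarrow> x \<subseteq> w)"

definition join_irreducible_in :: "'a set set \<Rightarrow> 'a set \<Rightarrow> bool" where
  "join_irreducible_in L x \<longleftrightarrow> x \<in> L \<and> \<not> (\<forall>y\<in>L. x \<subseteq> y) \<and>
     \<not> (\<exists>y\<in>L. \<exists>z\<in>L. y \<subset> x \<and> z \<subset> x \<and> is_join_in L y z x)"

end

theory Submission
  imports Defs
begin



locale pset =
  fixes p n :: nat and lam :: "nat \<Rightarrow> nat"
  assumes prime: "Factorial_Ring.prime p" and odd: "p \<noteq> 2" and n1: "n \<ge> 1"
    and lam1: "0 < lam 1" and incr: "\<forall>i\<in>{1..<n}. lam i < lam (i + 1)"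
begin

abbreviation "G \<equiv> Gp p lam n"
abbreviation "I \<equiv> {1..n}"
abbreviation "P i \<equiv> int p ^ lam i"

lemma p_gt1: "p > 1" using prime prime_gt_1_nat by blast
lemma P_pos: "P i > 0" using p_gt1 by simp

lemma grp: "group G"
  unfolding Gp_def by (rule product_group) simp

lemma carrier_G: "carrier G = (\<Pi>\<^sub>E i\<in>I. {0..<P i})"
  unfolding Gp_def using p_gt1 by (simp add: carrier_integer_mod_group)

lemma mult_G: "x \<otimes>\<^bsub>G\<^esub> y = (\<lambda>i\<in>I. (x i + y i) mod P i)"
  unfolding Gp_def by simp

lemma one_G: "\<one>\<^bsub>G\<^esub> = (\<lambda>i\<in>I. 0)"
  unfolding Gp_def by simp

lemma inv_G: "x \<in> carrier G \<Longrightarrow> inv\<^bsub>G\<^esub> x = (\<lambda>i\<in>I. (- x i) mod P i)"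
  unfolding Gp_def
  apply (subst inv_product_group)
    apply simp
   apply simp
  apply (rule restrict_ext)
  apply (subst inv_integer_mod_group)
   apply (auto simp: PiE_iff)
  done

lemma pow_G: "x \<in> carrier G \<Longrightarrow> x [^]\<^bsub>G\<^esub> (m::nat) = (\<lambda>i\<in>I. (int m * x i) mod P i)"
proof (induction m)
  case 0
  then show ?case by (simp add: one_G)
next
  case (Suc m)
  then show ?case
    by (simp add: mult_G fun_eq_iff mod_add_right_eq algebra_simps)
qed

lemma finite_G: "finite (carrier G)"
  unfolding carrier_G by (rule finite_PiE) auto

lemma in_G: "x \<in> carrier G \<longleftrightarrow> (\<forall>i\<in>I. 0 \<le> x i \<and> x i < P i) \<and> (\<forall>i. i \<notin> I \<longrightarrow> x i = undefined)"
  unfolding carrier_G by (auto simp: PiE_iff extensional_def)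

lemma iso_of_inj:
  assumes "f \<in> hom G G" "inj_on f (carrier G)"
  shows "f \<in> iso G G"
proof (rule isoI)
  show "f \<in> hom G G" by fact
  have "f ` carrier G \<subseteq> carrier G" using assms(1) by (auto simp: hom_def)
  then have "f ` carrier G = carrier G" using endo_inj_surj finite_G assms(2) by blast
  then show "bij_betw f (carrier G) (carrier G)" using assms(2) by (simp add: bij_betw_def)
qed

end


context pset begin

definition S :: "(nat \<Rightarrow> nat) \<Rightarrow> (nat \<Rightarrow> int) set" where
  "S b = {g \<in> carrier G. \<forall>i\<in>I. int p ^ (lam i - b i) dvd g i}"

lemma dvd_helper:
  assumes "b \<le> l"
  shows "(int p ^ b * x) mod (int p ^ l) = 0 \<longleftrightarrow> int p ^ (l - b) dvd x"
proof -
  have e: "int p ^ l = int p ^ b * int p ^ (l - b)"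
    using assms by (simp add: power_add[symmetric])
  have "int p ^ b \<noteq> 0" using p_gt1 by simp
  then show ?thesis unfolding e using p_gt1 by (simp add: mod_eq_0_iff_dvd)
qed

lemma ord_char:
  assumes "x \<in> carrier (integer_mod_group (p ^ l))" "b \<le> l"
  shows "(\<exists>c\<le>b. group.ord (integer_mod_group (p ^ l)) x = p ^ c) \<longleftrightarrow> int p ^ (l - b) dvd x"
proof -
  interpret Z: group "integer_mod_group (p ^ l)" by simp
  have A: "Z.ord x dvd p ^ b \<longleftrightarrow> x [^]\<^bsub>integer_mod_group (p ^ l)\<^esub> (p ^ b) = \<one>\<^bsub>integer_mod_group (p ^ l)\<^esub>"
    by (rule Z.pow_eq_id[OF assms(1), symmetric])
  have B: "x [^]\<^bsub>integer_mod_group (p ^ l)\<^esub> (p ^ b) = (int p ^ b * x) mod (int p ^ l)"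
    using pow_integer_mod_group[where n="p ^ l" and x=x and m="p ^ b"] by simp
  have "Z.ord x dvd p ^ b \<longleftrightarrow> (int p ^ b * x) mod (int p ^ l) = 0"
    unfolding A B by simp
  also have "\<dots> \<longleftrightarrow> int p ^ (l - b) dvd x" by (rule dvd_helper[OF assms(2)])
  finally have 1: "Z.ord x dvd p ^ b \<longleftrightarrow> int p ^ (l - b) dvd x" .
  have 2: "Z.ord x dvd p ^ b \<longleftrightarrow> (\<exists>c\<le>b. Z.ord x = p ^ c)"
    by (rule divides_primepow_nat[OF prime])
  show ?thesis using 1 2 by (simp only:)
qed

lemma Rset_eq:
  assumes "\<forall>i\<in>I. b i \<le> lam i"
  shows "Rset p lam n b = S b"
proof
  show "Rset p lam n b \<subseteq> S b"
  proof
    fix g assume "g \<in> Rset p lam n b"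
    then obtain c where c: "\<forall>i\<in>I. c i \<le> b i" and g: "g \<in> Tset p lam n c"
      unfolding Rset_def by auto
    have gc: "g \<in> carrier G" using g unfolding Tset_def by auto
    have "int p ^ (lam i - b i) dvd g i" if i: "i \<in> I" for i
    proof -
      have "g i \<in> carrier (integer_mod_group (p ^ lam i))"
        using gc i unfolding Gp_def by auto
      moreover have "group.ord (integer_mod_group (p ^ lam i)) (g i) = p ^ c i"
        using g i unfolding Tset_def by auto
      ultimately show ?thesis using ord_char[of "g i" "lam i" "b i"] c assms i by auto
    qed
    then show "g \<in> S b" using gc unfolding S_def by auto
  qed
next
  show "S b \<subseteq> Rset p lam n b"
  proof
    fix g assume g: "g \<in> S b"
    have gc: "g \<in> carrier G" using g unfolding S_def by auto
    have ex: "\<exists>c\<le>b i. group.ord (integer_mod_group (p ^ lam i)) (g i) = p ^ c" if i: "i \<in> I" for i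
    proof -
      have "g i \<in> carrier (integer_mod_group (p ^ lam i))"
        using gc i unfolding Gp_def by auto
      then show ?thesis using ord_char[of "g i" "lam i" "b i"] g assms i unfolding S_def by auto
    qed
    define c where "c i = (SOME c. c \<le> b i \<and> group.ord (integer_mod_group (p ^ lam i)) (g i) = p ^ c)" for i
    have c: "c i \<le> b i \<and> group.ord (integer_mod_group (p ^ lam i)) (g i) = p ^ c i" if "i \<in> I" for i
      unfolding c_def using someI_ex[OF ex[OF that]] by blast
    have "g \<in> Tset p lam n c" using gc c unfolding Tset_def by auto
    moreover have "c \<in> {b'. \<forall>i\<in>I. b' i \<le> b i}" using c by auto
    ultimately show "g \<in> Rset p lam n b" unfolding Rset_def by blast
  qed
qed

end


context pset begin

lemma mod_helper1: "((c::int) * ((u + (d * w) mod M) mod M)) mod M = (c*u + c*d*w) mod M"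
  by (simp add: mod_simps algebra_simps)

lemma div_le_self_int: "(0::int) \<le> a \<Longrightarrow> 0 < b \<Longrightarrow> a div b \<le> a"
  by (metis div_pos_pos_trivial int_div_le_self linorder_neqE linorder_not_le)

lemma lam_mono: "1 \<le> i \<Longrightarrow> i \<le> j \<Longrightarrow> j \<le> n \<Longrightarrow> lam i \<le> lam j"
proof (induction j)
  case 0 then show ?case by simp
next
  case (Suc j)
  show ?case
  proof (cases "i = Suc j")
    case False
    then have "i \<le> j" using Suc by simp
    then have "lam i \<le> lam j" using Suc by simp
    moreover have "lam j < lam (Suc j)" using incr Suc \<open>i \<le> j\<close> by auto
    ultimately show ?thesis by simp
  qed simp
qed

lemma lam_strict: "1 \<le> i \<Longrightarrow> i < j \<Longrightarrow> j \<le> n \<Longrightarrow> lam i < lam j"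
proof -
  assume a: "1 \<le> i" "i < j" "j \<le> n"
  then have "lam i \<le> lam (j - 1)" using lam_mono by simp
  moreover have "j - 1 \<in> {1..<n}" using a by auto
  then have "lam (j - 1) < lam (j - 1 + 1)" using incr by blast
  ultimately show ?thesis using a by simp
qed

lemma can_mono:
  assumes "canonical lam n b" "1 \<le> j" "j \<le> k" "k \<le> n"
  shows "b j \<le> b k \<and> int (b k) - int (b j) \<le> int (lam k) - int (lam j)"
  using assms(3,4)
proof (induction k)
  case 0 then show ?case using assms by simp
next
  case (Suc k)
  show ?case
  proof (cases "j = Suc k")
    case False
    then have jk: "j \<le> k" using Suc by simp
    then have IH: "b j \<le> b k \<and> int (b k) - int (b j) \<le> int (lam k) - int (lam j)" using Suc by simp
    have "Suc k \<in> {2..n}" using jk assms(2) Suc(3) by auto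
    then have "b (Suc k) \<ge> b (Suc k - 1)" using assms(1) unfolding canonical_def by blast
    moreover have "int (b (k + 1)) - int (b k) \<le> int (lam (k + 1)) - int (lam k)"
      using assms(1) jk assms(2) Suc(3) unfolding canonical_def by auto
    ultimately show ?thesis using IH by simp
  qed simp
qed

definition A :: "nat \<Rightarrow> (nat \<Rightarrow> nat) \<Rightarrow> (nat \<Rightarrow> int) set" where
  "A i b = {g \<in> carrier G. \<exists>u\<in>carrier G. \<exists>w\<in>carrier G.
     u [^]\<^bsub>G\<^esub> (p ^ b i) = \<one>\<^bsub>G\<^esub> \<and> g = u \<otimes>\<^bsub>G\<^esub> w [^]\<^bsub>G\<^esub> (p ^ (lam i - b i))}"

lemma A_hom:
  assumes f: "f \<in> hom G G"
  shows "f ` A i b \<subseteq> A i b"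
proof
  fix y assume "y \<in> f ` A i b"
  then obtain g u w where g: "g \<in> carrier G" and u: "u \<in> carrier G" and w: "w \<in> carrier G"
    and u1: "u [^]\<^bsub>G\<^esub> (p ^ b i) = \<one>\<^bsub>G\<^esub>"
    and ge: "g = u \<otimes>\<^bsub>G\<^esub> w [^]\<^bsub>G\<^esub> (p ^ (lam i - b i))" and y: "y = f g"
    unfolding A_def by blast
  interpret h: group_hom G G f using f grp by (simp add: group_hom_def group_hom_axioms_def)
  have "y = f u \<otimes>\<^bsub>G\<^esub> (f w) [^]\<^bsub>G\<^esub> (p ^ (lam i - b i))"
    using y ge u w by (simp add: h.hom_nat_pow)
  moreover have "(f u) [^]\<^bsub>G\<^esub> (p ^ b i) = \<one>\<^bsub>G\<^esub>"
    using u u1 by (metis h.hom_nat_pow h.hom_one)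
  moreover have "y \<in> carrier G" using y g by simp
  moreover have "f u \<in> carrier G" "f w \<in> carrier G" using u w by auto
  ultimately show "y \<in> A i b" unfolding A_def by blast
qed

lemma A_sub_S:
  assumes "\<forall>i\<in>I. b i \<le> lam i" "g \<in> carrier G" "\<forall>i\<in>I. g \<in> A i b"
  shows "g \<in> S b"
proof -
  have "int p ^ (lam i - b i) dvd g i" if i: "i \<in> I" for i
  proof -
    obtain u w where u: "u \<in> carrier G" and w: "w \<in> carrier G"
      and u1: "u [^]\<^bsub>G\<^esub> (p ^ b i) = \<one>\<^bsub>G\<^esub>"
      and ge: "g = u \<otimes>\<^bsub>G\<^esub> w [^]\<^bsub>G\<^esub> (p ^ (lam i - b i))"
      using assms(3) i unfolding A_def by blast
    have "(u [^]\<^bsub>G\<^esub> (p ^ b i)) i = 0" using u1 i by (simp add: one_G)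
    then have ui: "(int p ^ b i * u i) mod P i = 0" using u i by (simp add: pow_G)
    have gi: "g i = (u i + (int p ^ (lam i - b i) * w i) mod P i) mod P i"
      using ge i w by (simp add: mult_G pow_G)
    have e: "int p ^ b i * int p ^ (lam i - b i) = P i"
      using assms(1) i by (simp add: power_add[symmetric])
    have "(int p ^ b i * g i) mod P i = (int p ^ b i * u i + int p ^ b i * int p ^ (lam i - b i) * w i) mod P i"
      unfolding gi by (rule mod_helper1)
    then have "(int p ^ b i * g i) mod P i = (int p ^ b i * u i + P i * w i) mod P i"
      unfolding e .
    also have "\<dots> = (int p ^ b i * u i) mod P i" by (rule mod_mult_self2)
    also have "\<dots> = 0" by (rule ui)
    finally have "(int p ^ b i * g i) mod P i = 0" .
    moreover have "b i \<le> lam i" using assms(1) i by blast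
    ultimately show ?thesis using dvd_helper[of "b i" "lam i" "g i"] by simp
  qed
  then show ?thesis using assms(2) unfolding S_def by auto
qed

lemma S_sub_A:
  assumes can: "canonical lam n b" and g: "g \<in> S b" and i: "i \<in> I"
  shows "g \<in> A i b"
proof -
  define k where "k = lam i - b i"
  have gc: "g \<in> carrier G" and gd: "\<And>j. j \<in> I \<Longrightarrow> int p ^ (lam j - b j) dvd g j"
    using g unfolding S_def by auto
  have gr: "\<And>j. j \<in> I \<Longrightarrow> 0 \<le> g j \<and> g j < P j" and gu: "\<And>j. j \<notin> I \<Longrightarrow> g j = undefined"
    using gc in_G by auto
  have ble: "\<And>j. j \<in> I \<Longrightarrow> b j \<le> lam j" using can unfolding canonical_def by auto
  define u where "u = (\<lambda>j\<in>I. if j \<le> i then g j else 0)"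
  define w where "w = (\<lambda>j\<in>I. if j \<le> i then 0 else g j div int p ^ k)"
  have kd: "int p ^ k dvd g j" if "j \<in> I" "i < j" for j
  proof -
    have "int (b j) - int (b i) \<le> int (lam j) - int (lam i)"
      using can_mono[OF can, of i j] i that by auto
    then have "k \<le> lam j - b j" unfolding k_def using ble i that by auto
    then have "int p ^ k dvd int p ^ (lam j - b j)" by (simp add: le_imp_power_dvd)
    then show ?thesis using gd that dvd_trans by blast
  qed
  have uc: "u \<in> carrier G" unfolding in_G u_def using gr P_pos by auto
  have wc: "w \<in> carrier G"
  proof -
    have "0 \<le> g j div int p ^ k \<and> g j div int p ^ k < P j" if j: "j \<in> I" for j
    proof -
      have "g j div int p ^ k \<le> g j" using gr j p_gt1 using div_le_self_int[of "g j" "int p ^ k"] p_gt1 by simp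
      then show ?thesis using gr[OF j] p_gt1 by (auto simp: pos_imp_zdiv_nonneg_iff)
    qed
    then show ?thesis unfolding in_G w_def using P_pos by auto
  qed
  have u1: "u [^]\<^bsub>G\<^esub> (p ^ b i) = \<one>\<^bsub>G\<^esub>"
  proof -
    have "(int p ^ b i * u j) mod P j = 0" if j: "j \<in> I" for j
    proof (cases "j \<le> i")
      case True
      have "b j \<le> b i" using can_mono[OF can, of j i] True j i by auto
      then have d1: "int p ^ b j dvd int p ^ b i" by (simp add: le_imp_power_dvd)
      have "int p ^ b j * int p ^ (lam j - b j) = P j" using ble j by (simp add: power_add[symmetric])
      moreover have "int p ^ b j * int p ^ (lam j - b j) dvd int p ^ b i * g j"
        using d1 gd[OF j] by (rule mult_dvd_mono)
      ultimately show ?thesis using True j unfolding u_def by simp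
    next
      case False then show ?thesis unfolding u_def using j by simp
    qed
    then show ?thesis using uc by (auto simp: pow_G one_G intro!: restrict_ext)
  qed
  have ge: "g = u \<otimes>\<^bsub>G\<^esub> w [^]\<^bsub>G\<^esub> (p ^ k)"
  proof (rule ext)
    fix j
    show "g j = (u \<otimes>\<^bsub>G\<^esub> w [^]\<^bsub>G\<^esub> (p ^ k)) j"
    proof (cases "j \<in> I")
      case False then show ?thesis using gu[OF False] by (auto simp: mult_G)
    next
      case j: True
      show ?thesis
      proof (cases "j \<le> i")
        case True then show ?thesis using j wc gr[OF j] by (simp add: mult_G pow_G u_def w_def)
      next
        case False
        then have "int p ^ k * (g j div int p ^ k) = g j" using kd[OF j] by simp
        then show ?thesis using j wc gr[OF j] False by (simp add: mult_G pow_G u_def w_def)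
      qed
    qed
  qed
  have ge': "g = u \<otimes>\<^bsub>G\<^esub> w [^]\<^bsub>G\<^esub> (p ^ (lam i - b i))" using ge unfolding k_def .
  have ex: "\<exists>u\<in>carrier G. \<exists>w\<in>carrier G. u [^]\<^bsub>G\<^esub> (p ^ b i) = \<one>\<^bsub>G\<^esub> \<and> g = u \<otimes>\<^bsub>G\<^esub> w [^]\<^bsub>G\<^esub> (p ^ (lam i - b i))"
    apply (rule bexI[where x=u])
     apply (rule bexI[where x=w])
      apply (rule conjI[OF u1 ge'])
     apply (rule wc)
    apply (rule uc)
    done
  show ?thesis unfolding A_def by (rule CollectI, rule conjI[OF gc ex])
qed

lemma S_sub: "S b \<subseteq> carrier G" unfolding S_def by auto

lemma S_hom:
  assumes can: "canonical lam n b" and f: "f \<in> hom G G"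
  shows "f ` S b \<subseteq> S b"
proof
  fix y assume "y \<in> f ` S b"
  then obtain g where g: "g \<in> S b" and y: "y = f g" by auto
  have "y \<in> carrier G" using g y f S_sub by (auto simp: hom_def)
  moreover have "\<forall>i\<in>I. y \<in> A i b" using A_hom[OF f] S_sub_A[OF can g] y by blast
  moreover have "\<forall>i\<in>I. b i \<le> lam i" using can unfolding canonical_def by auto
  ultimately show "y \<in> S b" using A_sub_S by blast
qed

lemma S_subgroup:
  assumes ble: "\<forall>i\<in>I. b i \<le> lam i"
  shows "subgroup (S b) G"
proof -
  interpret G: group G by (rule grp)
  show ?thesis
proof (rule group.subgroupI[OF grp])
  show "S b \<subseteq> carrier G" by (rule S_sub)
  have "\<one>\<^bsub>G\<^esub> \<in> S b" unfolding S_def using G.one_closed by (simp add: one_G)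
  then show "S b \<noteq> {}" by auto
next
  fix x assume x: "x \<in> S b"
  have xc: "x \<in> carrier G" using x S_sub by auto
  have d: "\<And>i. i \<in> I \<Longrightarrow> int p ^ (lam i - b i) dvd P i" using ble by (simp add: le_imp_power_dvd)
  show "inv\<^bsub>G\<^esub> x \<in> S b" unfolding S_def
    using G.inv_closed[OF xc] x d by (auto simp: inv_G[OF xc] S_def dvd_mod_iff)
next
  fix x y assume x: "x \<in> S b" and y: "y \<in> S b"
  have xc: "x \<in> carrier G" and yc: "y \<in> carrier G" using x y S_sub by auto
  have d: "\<And>i. i \<in> I \<Longrightarrow> int p ^ (lam i - b i) dvd P i" using ble by (simp add: le_imp_power_dvd)
  show "x \<otimes>\<^bsub>G\<^esub> y \<in> S b" unfolding S_def
    using G.m_closed[OF xc yc] x y d by (auto simp: mult_G S_def dvd_mod_iff)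
qed
qed

lemma iso_image_eq:
  assumes f: "f \<in> iso G G" and H: "H \<subseteq> carrier G" and sub: "f ` H \<subseteq> H"
  shows "f ` H = H"
proof -
  have "inj_on f (carrier G)" using f by (auto simp: iso_def bij_betw_def)
  then have "inj_on f H" using H inj_on_subset by blast
  then have "card (f ` H) = card H" by (rule card_image)
  moreover have "finite H" using H finite_G finite_subset by blast
  ultimately show ?thesis using sub card_subset_eq by blast
qed

lemma S_char:
  assumes can: "canonical lam n b"
  shows "S b \<in> char_subgroups G"
  unfolding char_subgroups_def
proof (intro CollectI conjI ballI)
  show "subgroup (S b) G" using S_subgroup can unfolding canonical_def by auto
  fix f assume f: "f \<in> iso G G"
  then have "f \<in> hom G G" by (simp add: iso_def)
  then show "f ` S b = S b" using iso_image_eq[OF f S_sub] S_hom[OF can] by blast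
qed

end


context pset begin

lemma ext0_pos: "j \<ge> 1 \<Longrightarrow> ext0 a j = a j" by (simp add: ext0_def)

lemma deg_F:
  assumes deg: "\<And>j. i < j \<Longrightarrow> j \<le> n \<Longrightarrow> degenerate_at lam n a j"
  shows "i < j \<Longrightarrow> j \<le> n \<Longrightarrow> ext0 a j = ext0 a (j - 1)"
proof (induction "n - j" arbitrary: j)
  case 0
  then have "j = n" by simp
  then show ?case using deg[of j] 0 n1 unfolding degenerate_at_def by auto
next
  case (Suc d)
  then have jn: "j < n" by simp
  have IH: "ext0 a (j + 1) = ext0 a j" using Suc(1)[of "j + 1"] Suc(2-4) by simp
  then have eq: "a (j + 1) = a j" using Suc(3) by (simp add: ext0_def)
  have "lam j < lam (j + 1)" using incr Suc(3) jn by auto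
  then show ?case using deg[of j] Suc(3,4) eq unfolding degenerate_at_def by auto
qed

lemma all_deg_zero:
  assumes deg: "\<And>j. 0 < j \<Longrightarrow> j \<le> n \<Longrightarrow> degenerate_at lam n a j"
  shows "j \<le> n \<Longrightarrow> ext0 a j = 0"
proof (induction j)
  case 0 then show ?case by (simp add: ext0_def)
next
  case (Suc j)
  then show ?case using deg_F[of 0 a "Suc j"] deg by simp
qed

lemma nondeg_pos:
  assumes can: "canonical lam n a" and nd: "nondegenerate_at lam n a i"
  shows "a i \<ge> 1"
proof -
  have i: "i \<in> I" and ne: "ext0 a i \<noteq> ext0 a (i - 1)"
    using nd unfolding nondegenerate_at_def degenerate_at_def by auto
  show ?thesis
  proof (cases "i = 1")
    case True then show ?thesis using ne by (simp add: ext0_def)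
  next
    case False
    then have "i \<in> {2..n}" using i by auto
    then have "a (i - 1) \<le> a i" using can unfolding canonical_def by blast
    then show ?thesis using ne False i by (simp add: ext0_def)
  qed
qed

lemma unique_above:
  assumes nd: "\<And>j. j \<noteq> i \<Longrightarrow> \<not> nondegenerate_at lam n a j" and i: "i \<in> I"
  shows "i \<le> j \<Longrightarrow> j \<le> n \<Longrightarrow> a j = a i"
proof (induction j)
  case 0 then show ?case using i by simp
next
  case (Suc j)
  show ?case
  proof (cases "i = Suc j")
    case False
    then have ij: "i \<le> j" using Suc by simp
    have deg: "degenerate_at lam n a k" if "i < k" "k \<le> n" for k
      using nd[of k] that i unfolding nondegenerate_at_def by auto
    have "ext0 a (Suc j) = ext0 a (Suc j - 1)" using deg_F[of i a "Suc j", OF deg] ij Suc(3) by simp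
    then have "a (Suc j) = a j" using ij i by (simp add: ext0_def)
    then show ?thesis using Suc ij by simp
  qed simp
qed

lemma below_D:
  assumes nd: "\<And>j. j \<noteq> i \<Longrightarrow> \<not> nondegenerate_at lam n a j" and i: "i \<in> I"
  shows "1 \<le> j \<Longrightarrow> j < i \<Longrightarrow> ext0 a j = ext0 a (j - 1) \<Longrightarrow> a j = 0"
proof (induction j)
  case 0 then show ?case by simp
next
  case (Suc j)
  show ?case
  proof (cases "j = 0")
    case True then show ?thesis using Suc by (simp add: ext0_def)
  next
    case False
    have jn: "j \<in> I" using False Suc(3) i by auto
    then have "degenerate_at lam n a j" using nd[of j] Suc(3) unfolding nondegenerate_at_def by auto
    moreover have "lam j < lam (j + 1)" using incr jn Suc(3) i by auto
    moreover have eq: "a (Suc j) = a j" using Suc(4) False by (simp add: ext0_def)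
    ultimately have "ext0 a j = ext0 a (j - 1)" unfolding degenerate_at_def by auto
    then have "a j = 0" using Suc(1) False Suc(3) by simp
    then show ?thesis using eq by simp
  qed
qed

lemma below_E:
  assumes nd: "\<And>j. j \<noteq> i \<Longrightarrow> \<not> nondegenerate_at lam n a j" and i: "i \<in> I"
  shows "1 \<le> j \<Longrightarrow> j \<le> i \<Longrightarrow> a j = 0 \<or> int (a j) + int (lam i) - int (lam j) \<le> int (a i)"
proof (induction "i - j" arbitrary: j)
  case 0 then show ?case by simp
next
  case (Suc d)
  then have ji: "j < i" by simp
  have jn: "j \<in> I" using ji Suc(3) i by auto
  have dg: "degenerate_at lam n a j" using nd[of j] ji jn unfolding nondegenerate_at_def by auto
  show ?case
  proof (cases "ext0 a j = ext0 a (j - 1)")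
    case True then show ?thesis using below_D[OF nd i] Suc(3) ji by blast
  next
    case False
    then have st: "int (a (j + 1)) - int (a j) = int (lam (j + 1)) - int (lam j)"
      using dg unfolding degenerate_at_def by auto
    have "lam j < lam (j + 1)" using incr jn ji i by auto
    then have "a (j + 1) \<noteq> 0" using st by linarith
    then have "int (a (j + 1)) + int (lam i) - int (lam (j + 1)) \<le> int (a i)"
      using Suc(1)[of "j + 1"] Suc(2) ji by fastforce
    then show ?thesis using st by linarith
  qed
qed

lemma lower_canonical:
  assumes can: "canonical lam n a" and nd: "nondegenerate_at lam n a i"
  shows "canonical lam n (a(i := a i - 1))"
proof -
  have i: "i \<in> I" and ne: "ext0 a i \<noteq> ext0 a (i - 1)"
    and ne2: "\<not> (i \<le> n - 1 \<and> int (a (i + 1)) - int (a i) = int (lam (i + 1)) - int (lam i))"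
    using nd unfolding nondegenerate_at_def degenerate_at_def by auto
  have pos: "a i \<ge> 1" using nondeg_pos[OF can nd] .
  have c1: "\<forall>k\<in>I. a k \<le> lam k" and c2: "\<forall>k\<in>{2..n}. a (k - 1) \<le> a k"
    and c3: "\<forall>k\<in>{1..n-1}. int (a (k + 1)) - int (a k) \<le> int (lam (k + 1)) - int (lam k)"
    using can unfolding canonical_def by auto
  have gt: "i \<ge> 2 \<Longrightarrow> a (i - 1) < a i" using c2 i ne by (force simp: ext0_def)
  show ?thesis unfolding canonical_def
  proof (intro conjI ballI)
    fix k assume k: "k \<in> I"
    have "a k \<le> lam k" using c1 k by blast
    then show "(a(i := a i - 1)) k \<le> lam k" by auto
  next
    fix k assume k: "k \<in> {2..n}"
    show "(a(i := a i - 1)) (k - 1) \<le> (a(i := a i - 1)) k"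
    proof -
      have "a (k - 1) \<le> a k" using c2 k by blast
      then show ?thesis using k gt by (cases "k = i"; cases "k - 1 = i"; auto)
    qed
  next
    fix k assume k: "k \<in> {1..n-1}"
    have "int (a (k + 1)) - int (a k) \<le> int (lam (k + 1)) - int (lam k)" using c3 k by blast
    moreover have "k = i \<Longrightarrow> int (a (k + 1)) - int (a k) \<noteq> int (lam (k + 1)) - int (lam k)"
      using ne2 k by auto
    ultimately show "int ((a(i := a i - 1)) (k + 1)) - int ((a(i := a i - 1)) k)
        \<le> int (lam (k + 1)) - int (lam k)"
      using pos by (cases "k = i"; cases "k + 1 = i"; auto)
  qed
qed

end



lemma small_dvd: "(M::int) dvd d \<Longrightarrow> \<bar>d\<bar> < M \<Longrightarrow> d = 0"
  using dvd_imp_le_int by force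

lemma odd_cancel: "odd (M::int) \<Longrightarrow> 0 \<le> x \<Longrightarrow> x < M \<Longrightarrow> 0 \<le> y \<Longrightarrow> y < M \<Longrightarrow> (2*x) mod M = (2*y) mod M \<Longrightarrow> x = y"
proof -
  assume o: "odd M" and r: "0 \<le> x" "x < M" "0 \<le> y" "y < M" and e: "(2*x) mod M = (2*y) mod M"
  have "M dvd 2 * (x - y)" using e by (simp add: mod_eq_dvd_iff algebra_simps)
  moreover have "coprime M 2" using o by (simp add: coprime_commute)
  ultimately have "M dvd x - y" using coprime_dvd_mult_right_iff by blast
  then show ?thesis using small_dvd[of M "x - y"] r by auto
qed

lemma add_cancel_mod: "0 \<le> (x::int) \<Longrightarrow> x < M \<Longrightarrow> 0 \<le> y \<Longrightarrow> y < M \<Longrightarrow> (x + c) mod M = (y + c) mod M \<Longrightarrow> x = y"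
proof -
  assume r: "0 \<le> x" "x < M" "0 \<le> y" "y < M" and e: "(x + c) mod M = (y + c) mod M"
  have "M dvd x - y" using e by (simp add: mod_eq_dvd_iff algebra_simps)
  then show ?thesis using small_dvd[of M "x - y"] r by auto
qed

lemma two_mod: "((2::int) * ((x + y) mod M)) mod M = ((2 * x) mod M + (2 * y) mod M) mod M"
  by (simp add: mod_simps distrib_left)
lemma two_inv_mod: "((2 * x) mod M + (- x) mod M) mod (M::int) = x mod M"
  by (simp add: mod_simps)
lemma inv_mod0: "((x::int) + (- x) mod M) mod M = 0"
  by (simp add: mod_simps)

lemma mod4: "((a + b) + (c + d) mod M) mod M = ((a + c) mod M + (b + d) mod M) mod (M::int)"
proof -
  have "((a + b) + (c + d) mod M) mod M = (a + b + (c + d)) mod M" by (rule mod_add_right_eq)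
  also have "\<dots> = ((a + c) + (b + d)) mod M" by (simp add: algebra_simps)
  also have "\<dots> = ((a + c) mod M + (b + d) mod M) mod M" by (rule mod_add_eq[symmetric])
  finally show ?thesis .
qed

context pset begin

lemma odd_P: "odd (P i)"
  using prime odd by (metis even_of_nat two_is_prime prime_dvd_power primes_dvd_imp_eq)

definition E :: "nat \<Rightarrow> int \<Rightarrow> (nat \<Rightarrow> int)" where
  "E j t = (\<lambda>k\<in>I. if k = j then t else 0)"

lemma E_carrier: "j \<in> I \<Longrightarrow> 0 \<le> t \<Longrightarrow> t < P j \<Longrightarrow> E j t \<in> carrier G"
  unfolding in_G E_def using P_pos by auto

lemma E_pow: "E j t \<in> carrier G \<Longrightarrow> E j t [^]\<^bsub>G\<^esub> m = E j ((int m * t) mod P j)"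
  by (auto simp: pow_G E_def intro!: restrict_ext)

lemma E_zero: "E j 0 = \<one>\<^bsub>G\<^esub>"
  by (auto simp: E_def one_G intro!: restrict_ext)

definition sig :: "nat \<Rightarrow> (nat \<Rightarrow> int) \<Rightarrow> (nat \<Rightarrow> int)" where
  "sig i x = (\<lambda>k\<in>I. if k = i then (2 * x k) mod P k else x k)"

lemma sig_iso: "sig i \<in> iso G G"
proof (rule iso_of_inj)
  show "sig i \<in> hom G G"
  proof (rule homI)
    fix x assume "x \<in> carrier G" then show "sig i x \<in> carrier G"
      unfolding in_G sig_def using P_pos by auto
  next
    fix x y assume x: "x \<in> carrier G" and y: "y \<in> carrier G"
    show "sig i (x \<otimes>\<^bsub>G\<^esub> y) = sig i x \<otimes>\<^bsub>G\<^esub> sig i y"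
      by (auto simp: sig_def mult_G two_mod intro!: restrict_ext)
  qed
next
  show "inj_on (sig i) (carrier G)"
  proof (rule inj_onI)
    fix x y assume x: "x \<in> carrier G" and y: "y \<in> carrier G" and e: "sig i x = sig i y"
    show "x = y"
    proof (rule ext)
      fix k
      show "x k = y k"
      proof (cases "k \<in> I")
        case False then show ?thesis using x y in_G by auto
      next
        case True
        have ek: "sig i x k = sig i y k" using e by simp
        show ?thesis
        proof (cases "k = i")
          case False then show ?thesis using ek True by (simp add: sig_def)
        next
          case ki: True
          then have "(2 * x k) mod P k = (2 * y k) mod P k" using ek True by (simp add: sig_def)
          then show ?thesis using odd_cancel[OF odd_P] x y True in_G by blast
        qed
      qed
    qed
  qed
qed

lemma sig_extract:
  assumes g: "g \<in> carrier G" and i: "i \<in> I"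
  shows "sig i g \<otimes>\<^bsub>G\<^esub> inv\<^bsub>G\<^esub> g = E i (g i)"
proof -
  have r: "\<And>k. k \<in> I \<Longrightarrow> 0 \<le> g k \<and> g k < P k" using g in_G by auto
  show ?thesis
    using r by (auto simp: sig_def mult_G inv_G[OF g] E_def two_inv_mod inv_mod0 intro!: restrict_ext)
qed

definition phi :: "nat \<Rightarrow> nat \<Rightarrow> int \<Rightarrow> int" where
  "phi i j t = (if i < j then int p ^ (lam j - lam i) * t else t)"

lemma phi_add: "phi i j (s + t) = phi i j s + phi i j t"
  by (simp add: phi_def distrib_left)

lemma phi_mod:
  assumes i: "i \<in> I" and j: "j \<in> I"
  shows "phi i j (t mod P i) mod P j = phi i j t mod P j"
proof (cases "i < j")
  case True
  have "lam i \<le> lam j" using lam_mono[of i j] i j True by auto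
  then have e: "int p ^ (lam j - lam i) * P i = P j" by (simp add: power_add[symmetric])
  have "int p ^ (lam j - lam i) * (t mod P i) = (int p ^ (lam j - lam i) * t) mod P j"
    unfolding e[symmetric] by (rule mult_mod_right)
  then show ?thesis using True by (simp add: phi_def)
next
  case False
  then have "lam j \<le> lam i" using lam_mono[of j i] i j by auto
  then have "P j dvd P i" by (simp add: le_imp_power_dvd)
  then show ?thesis using False by (simp add: phi_def mod_mod_cancel)
qed

definition tv :: "nat \<Rightarrow> nat \<Rightarrow> (nat \<Rightarrow> int) \<Rightarrow> (nat \<Rightarrow> int)" where
  "tv i j x = (\<lambda>k\<in>I. if k = j then (x k + phi i j (x i)) mod P k else x k)"

lemma tv_iso:
  assumes i: "i \<in> I" and j: "j \<in> I" and ij: "i \<noteq> j"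
  shows "tv i j \<in> iso G G"
proof (rule iso_of_inj)
  show "tv i j \<in> hom G G"
  proof (rule homI)
    fix x assume "x \<in> carrier G" then show "tv i j x \<in> carrier G"
      unfolding in_G tv_def using P_pos by auto
  next
    fix x y assume x: "x \<in> carrier G" and y: "y \<in> carrier G"
    have key: "((x j + y j) mod P j + phi i j ((x i + y i) mod P i)) mod P j
        = ((x j + phi i j (x i)) mod P j + (y j + phi i j (y i)) mod P j) mod P j"
    proof -
      have "((x j + y j) mod P j + phi i j ((x i + y i) mod P i)) mod P j
          = ((x j + y j) + phi i j ((x i + y i) mod P i) mod P j) mod P j"
        by (simp add: mod_simps)
      also have "\<dots> = ((x j + y j) + phi i j (x i + y i) mod P j) mod P j"
        using phi_mod[OF i j] by simp
      also have "\<dots> = ((x j + y j) + (phi i j (x i) + phi i j (y i)) mod P j) mod P j"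
        by (simp add: phi_add)
      also have "\<dots> = ((x j + phi i j (x i)) mod P j + (y j + phi i j (y i)) mod P j) mod P j"
        by (rule mod4)
      finally show ?thesis .
    qed
    show "tv i j (x \<otimes>\<^bsub>G\<^esub> y) = tv i j x \<otimes>\<^bsub>G\<^esub> tv i j y"
      using key i j ij by (auto simp: tv_def mult_G intro!: restrict_ext)
  qed
next
  show "inj_on (tv i j) (carrier G)"
  proof (rule inj_onI)
    fix x y assume x: "x \<in> carrier G" and y: "y \<in> carrier G" and e: "tv i j x = tv i j y"
    have oth: "x k = y k" if "k \<in> I" "k \<noteq> j" for k
      using fun_cong[OF e, of k] that by (simp add: tv_def)
    have xi: "x i = y i" using oth i ij by blast
    show "x = y"
    proof (rule ext)
      fix k
      show "x k = y k"
      proof (cases "k \<in> I")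
        case False then show ?thesis using x y in_G by auto
      next
        case True
        show ?thesis
        proof (cases "k = j")
          case False then show ?thesis using oth True by blast
        next
          case kj: True
          have "(x j + phi i j (x i)) mod P j = (y j + phi i j (y i)) mod P j"
            using fun_cong[OF e, of j] j by (simp add: tv_def)
          then have "(x j + phi i j (x i)) mod P j = (y j + phi i j (x i)) mod P j" using xi by simp
          then show ?thesis using add_cancel_mod x y j in_G kj by blast
        qed
      qed
    qed
  qed
qed

lemma tv_extract:
  assumes i: "i \<in> I" and j: "j \<in> I" and ij: "i \<noteq> j" and c: "E i c \<in> carrier G"
  shows "tv i j (E i c) \<otimes>\<^bsub>G\<^esub> inv\<^bsub>G\<^esub> (E i c) = E j (phi i j c mod P j)"
  unfolding inv_G[OF c] using i j ij by (auto simp: tv_def mult_G E_def inv_mod0 intro!: restrict_ext)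

end


context pset begin

lemma pow_lt_P: "e < lam j \<Longrightarrow> int p ^ e < P j"
  by (rule power_strict_increasing) (use p_gt1 in auto)

lemma H_pow: "subgroup H G \<Longrightarrow> x \<in> H \<Longrightarrow> x [^]\<^bsub>G\<^esub> (m::nat) \<in> H"
proof (induction m)
  case 0 then show ?case by (simp add: subgroup.one_closed)
next
  case (Suc m)
  then show ?case by (simp add: subgroup.m_closed)
qed

lemma char_mem: "H \<in> char_subgroups G \<Longrightarrow> f \<in> iso G G \<Longrightarrow> x \<in> H \<Longrightarrow> f x \<in> H"
  unfolding char_subgroups_def by blast

lemma char_sub: "H \<in> char_subgroups G \<Longrightarrow> subgroup H G"
  unfolding char_subgroups_def by blast

lemma E_gen:
  assumes Hs: "subgroup H G" and j: "j \<in> I" and e: "e < lam j" and Ee: "E j (int p ^ e) \<in> H"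
    and t: "0 \<le> t" "t < P j" "int p ^ e dvd t"
  shows "E j t \<in> H"
proof -
  obtain r where r: "t = int p ^ e * r" using t(3) by blast
  have pe: "int p ^ e > 0" using p_gt1 by simp
  have r0: "0 \<le> r" using t(1) r pe by (simp add: zero_le_mult_iff)
  have ec: "E j (int p ^ e) \<in> carrier G"
    using E_carrier[OF j _ pow_lt_P[OF e]] by simp
  have "E j (int p ^ e) [^]\<^bsub>G\<^esub> (nat r) = E j ((int (nat r) * int p ^ e) mod P j)"
    by (rule E_pow[OF ec])
  also have "\<dots> = E j t" using r r0 t by (simp add: mult.commute)
  finally show ?thesis using H_pow[OF Hs Ee] by metis
qed

lemma key:
  assumes can: "canonical lam n a" and nd: "nondegenerate_at lam n a i"
    and uniq: "\<And>j. j \<noteq> i \<Longrightarrow> \<not> nondegenerate_at lam n a j"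
    and Hc: "H \<in> char_subgroups G" and HS: "H \<subseteq> S a" and g: "g \<in> H"
    and ng: "\<not> int p ^ (lam i - a i + 1) dvd g i"
  shows "S a \<subseteq> H"
proof -
  have i: "i \<in> I" using nd unfolding nondegenerate_at_def by auto
  have pos: "a i \<ge> 1" using nondeg_pos[OF can nd] .
  have ale: "\<And>j. j \<in> I \<Longrightarrow> a j \<le> lam j" using can unfolding canonical_def by auto
  have Hs: "subgroup H G" using char_sub[OF Hc] .
  interpret G: group G by (rule grp)
  have gc: "g \<in> carrier G" using g HS S_sub by blast
  define D where "D = lam i - a i"
  have D_lt: "D < lam i" using pos ale[OF i] unfolding D_def by simp
  have gd: "int p ^ D dvd g i" using g HS i unfolding S_def D_def by blast
  have gr: "0 \<le> g i \<and> g i < P i" using gc i in_G by blast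
  have h1: "E i (g i) \<in> H"
  proof -
    have "sig i g \<in> H" using char_mem[OF Hc sig_iso g] .
    moreover have "inv\<^bsub>G\<^esub> g \<in> H" using subgroup.m_inv_closed[OF Hs g] .
    ultimately have "sig i g \<otimes>\<^bsub>G\<^esub> inv\<^bsub>G\<^esub> g \<in> H" using subgroup.m_closed[OF Hs] by blast
    then show ?thesis using sig_extract[OF gc i] by simp
  qed
  obtain v where gv: "g i = int p ^ D * v" using gd by blast
  have npv: "\<not> int p dvd v"
  proof
    assume "int p dvd v"
    then obtain w where "v = int p * w" by blast
    then have "g i = int p ^ (lam i - a i + 1) * w" using gv unfolding D_def by simp
    then show False using ng by simp
  qed
  define q where "q = int p ^ a i"
  have q1: "q > 1" unfolding q_def using pos p_gt1 by (intro one_less_power) auto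
  have pi: "Factorial_Ring.prime (int p)" using prime by simp
  have cop: "coprime v q" unfolding q_def using prime_imp_power_coprime[OF pi npv] .
  obtain x y where xy: "x * v + y * q = 1"
    using bezout_int[of v q] cop by (auto simp: coprime_iff_gcd_eq_1)
  define m where "m = nat (x mod q)"
  have mi: "int m = x mod q" unfolding m_def using q1 by simp
  have Pq: "P i = int p ^ D * q" unfolding D_def q_def using ale[OF i]
    by (simp add: power_add[symmetric])
  have e1: "int m * g i = int p ^ D * ((x mod q) * v)" unfolding mi gv by (simp only: ac_simps)
  have "(int m * g i) mod P i = int p ^ D * (((x mod q) * v) mod q)"
    unfolding e1 Pq by (rule mult_mod_right[symmetric])
  also have "((x mod q) * v) mod q = (x * v) mod q" by (rule mod_mult_left_eq)
  also have "x * v = 1 + (- y) * q" using xy by simp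
  also have "(1 + (- y) * q) mod q = 1 mod q" by (rule mod_mult_self1)
  also have "(1::int) mod q = 1" using q1 by simp
  finally have mg: "(int m * g i) mod P i = int p ^ D" by simp
  have Eic: "E i (g i) \<in> carrier G" using E_carrier[OF i] gr by blast
  have hD: "E i (int p ^ D) \<in> H"
    using H_pow[OF Hs h1, of m] unfolding E_pow[OF Eic] mg .
  have EDc: "E i (int p ^ D) \<in> carrier G"
    using E_carrier[OF i _ pow_lt_P[OF D_lt]] by simp
  have gen: "a j = 0 \<or> (\<exists>e. e \<le> lam j - a j \<and> e < lam j \<and> E j (int p ^ e) \<in> H)" if j: "j \<in> I" for j
  proof (cases "j = i")
    case True then show ?thesis using hD D_lt unfolding D_def by blast
  next
    case ji: False
    have "tv i j (E i (int p ^ D)) \<in> H" using char_mem[OF Hc tv_iso[OF i j] hD] ji by simp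
    moreover have "inv\<^bsub>G\<^esub> (E i (int p ^ D)) \<in> H" using subgroup.m_inv_closed[OF Hs hD] .
    ultimately have "tv i j (E i (int p ^ D)) \<otimes>\<^bsub>G\<^esub> inv\<^bsub>G\<^esub> (E i (int p ^ D)) \<in> H"
      using subgroup.m_closed[OF Hs] by blast
    then have hj: "E j (phi i j (int p ^ D) mod P j) \<in> H"
      using tv_extract[OF i j _ EDc] ji by simp
    show ?thesis
    proof (cases "i < j")
      case True
      have aj: "a j = a i" using unique_above[OF uniq i, of j] True j by simp
      have lij: "lam i \<le> lam j" using lam_mono[of i j] i j True by simp
      have "phi i j (int p ^ D) = int p ^ (lam j - a j)"
        unfolding phi_def D_def using True aj lij ale[OF i] by (simp add: power_add[symmetric])
      moreover have lt: "lam j - a j < lam j" using aj pos ale[OF j] by simp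
      moreover have "int p ^ (lam j - a j) < P j" using pow_lt_P[OF lt] .
      ultimately have "E j (int p ^ (lam j - a j)) \<in> H" using hj by simp
      then show ?thesis using lt by blast
    next
      case False
      then have jli: "j < i" using ji by simp
      show ?thesis
      proof (cases "a j = 0")
        case False
        then have "int (a j) + int (lam i) - int (lam j) \<le> int (a i)"
          using below_E[OF uniq i, of j] j jli by auto
        then have De: "D \<le> lam j - a j" unfolding D_def using ale[OF i] ale[OF j] by simp
        then have Dl: "D < lam j" using False ale[OF j] by simp
        have "phi i j (int p ^ D) = int p ^ D" unfolding phi_def using jli by simp
        moreover have "int p ^ D < P j" using pow_lt_P[OF Dl] .
        ultimately have "E j (int p ^ D) \<in> H" using hj by simp
        then show ?thesis using De Dl by blast
      qed simp
    qed
  qed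
  have genall: "E j t \<in> H" if j: "j \<in> I" and t: "0 \<le> t" "t < P j" "int p ^ (lam j - a j) dvd t" for j t
  proof (cases "a j = 0")
    case True
    then have "t = 0" using t small_dvd[of "P j" t] by simp
    then show ?thesis using E_zero subgroup.one_closed[OF Hs] by simp
  next
    case False
    have "\<exists>e. e \<le> lam j - a j \<and> e < lam j \<and> E j (int p ^ e) \<in> H" using gen[OF j] False by simp
    then obtain e where e: "e \<le> lam j - a j" "e < lam j" "E j (int p ^ e) \<in> H" by (elim exE conjE)
    have "int p ^ e dvd t" using dvd_trans[OF le_imp_power_dvd[OF e(1)] t(3)] .
    then show ?thesis using E_gen[OF Hs j e(2) e(3) t(1,2)] by blast
  qed
  show "S a \<subseteq> H"
  proof
    fix z assume z: "z \<in> S a"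
    have zc: "z \<in> carrier G" using z S_sub by blast
    have zr: "\<And>j. j \<in> I \<Longrightarrow> 0 \<le> z j \<and> z j < P j" and zu: "\<And>j. j \<notin> I \<Longrightarrow> z j = undefined"
      using zc in_G by auto
    have zd: "\<And>j. j \<in> I \<Longrightarrow> int p ^ (lam j - a j) dvd z j" using z unfolding S_def by blast
    define pp where "pp k = (\<lambda>j\<in>I. if j \<le> k then z j else 0)" for k
    have "pp k \<in> H" for k
    proof (induction k)
      case 0
      have "pp 0 = \<one>\<^bsub>G\<^esub>" by (auto simp: pp_def one_G intro!: restrict_ext)
      then show ?case using subgroup.one_closed[OF Hs] by simp
    next
      case (Suc k)
      show ?case
      proof (cases "Suc k \<in> I")
        case True
        have "pp (Suc k) = pp k \<otimes>\<^bsub>G\<^esub> E (Suc k) (z (Suc k))"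
          using zr by (auto simp: pp_def mult_G E_def intro!: restrict_ext)
        moreover have "E (Suc k) (z (Suc k)) \<in> H" using genall[OF True] zr[OF True] zd[OF True] by blast
        ultimately show ?thesis using Suc subgroup.m_closed[OF Hs] by simp
      next
        case False
        then have "pp (Suc k) = pp k" by (auto simp: pp_def intro!: restrict_ext)
        then show ?thesis using Suc by simp
      qed
    qed
    moreover have "pp n = z"
    proof (rule ext)
      fix j show "pp n j = z j" using zu by (cases "j \<in> I") (auto simp: pp_def)
    qed
    ultimately show "z \<in> H" by metis
  qed
qed

end


context pset begin

lemma triv_char: "{\<one>\<^bsub>G\<^esub>} \<in> char_subgroups G"
  unfolding char_subgroups_def
proof (intro CollectI conjI ballI)
  show "subgroup {\<one>\<^bsub>G\<^esub>} G" using group.triv_subgroup[OF grp] .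
  fix f assume "f \<in> iso G G"
  then have "f \<in> hom G G" by (simp add: iso_def)
  then have "f \<one>\<^bsub>G\<^esub> = \<one>\<^bsub>G\<^esub>" using hom_one grp by blast
  then show "f ` {\<one>\<^bsub>G\<^esub>} = {\<one>\<^bsub>G\<^esub>}" by simp
qed

lemma lower_mem:
  assumes can: "canonical lam n a" and nd: "nondegenerate_at lam n a i" and g: "g \<in> S a"
  shows "g \<in> S (a(i := a i - 1)) \<longleftrightarrow> int p ^ (lam i - a i + 1) dvd g i"
proof -
  have i: "i \<in> I" using nd unfolding nondegenerate_at_def by auto
  have pos: "a i \<ge> 1" using nondeg_pos[OF can nd] .
  have ale: "a i \<le> lam i" using can i unfolding canonical_def by auto
  have e: "lam i - (a i - 1) = lam i - a i + 1" using pos ale by simp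
  have "g \<in> S (a(i := a i - 1)) \<longleftrightarrow> int p ^ (lam i - (a i - 1)) dvd g i"
    using g i unfolding S_def by auto
  then show ?thesis by (simp only: e)
qed

lemma lower_sub:
  assumes can: "canonical lam n a" and nd: "nondegenerate_at lam n a i"
  shows "S (a(i := a i - 1)) \<subseteq> S a"
proof
  fix g assume g: "g \<in> S (a(i := a i - 1))"
  have "int p ^ (lam k - a k) dvd g k" if k: "k \<in> I" for k
  proof -
    have "int p ^ (lam k - (a(i := a i - 1)) k) dvd g k" using g k unfolding S_def by blast
    moreover have "lam k - a k \<le> lam k - (a(i := a i - 1)) k" by auto
    ultimately show ?thesis using dvd_trans le_imp_power_dvd by blast
  qed
  then show "g \<in> S a" using g unfolding S_def by auto
qed

lemma witness:
  assumes can: "canonical lam n a" and nd: "nondegenerate_at lam n a i"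
  shows "E i (int p ^ (lam i - a i)) \<in> S a" "E i (int p ^ (lam i - a i)) \<notin> S (a(i := a i - 1))"
    "E i (int p ^ (lam i - a i)) \<noteq> \<one>\<^bsub>G\<^esub>"
proof -
  have i: "i \<in> I" using nd unfolding nondegenerate_at_def by auto
  have pos: "a i \<ge> 1" using nondeg_pos[OF can nd] .
  have ale: "a i \<le> lam i" using can i unfolding canonical_def by auto
  have lt: "lam i - a i < lam i" using pos ale by simp
  have c: "E i (int p ^ (lam i - a i)) \<in> carrier G"
    using E_carrier[OF i _ pow_lt_P[OF lt]] by simp
  show m: "E i (int p ^ (lam i - a i)) \<in> S a" using c i unfolding S_def by (auto simp: E_def)
  have nd1: "\<not> int p ^ (lam i - a i + 1) dvd int p ^ (lam i - a i)"
  proof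
    assume "int p ^ (lam i - a i + 1) dvd int p ^ (lam i - a i)"
    then have "int p ^ (lam i - a i) * int p dvd int p ^ (lam i - a i) * 1" by simp
    then have "int p dvd 1" using p_gt1 by (subst (asm) dvd_mult_cancel_left) simp
    then show False using p_gt1 by simp
  qed
  show "E i (int p ^ (lam i - a i)) \<notin> S (a(i := a i - 1))"
    using lower_mem[OF can nd m] nd1 i by (simp add: E_def)
  show "E i (int p ^ (lam i - a i)) \<noteq> \<one>\<^bsub>G\<^esub>"
  proof
    assume "E i (int p ^ (lam i - a i)) = \<one>\<^bsub>G\<^esub>"
    then have "E i (int p ^ (lam i - a i)) i = \<one>\<^bsub>G\<^esub> i" by simp
    then show False using i p_gt1 by (simp add: E_def one_G)
  qed
qed

lemma zero_case:
  assumes can: "canonical lam n a" and none: "\<And>j. \<not> nondegenerate_at lam n a j"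
    and y: "y \<in> char_subgroups G"
  shows "S a \<subseteq> y"
proof
  fix g assume g: "g \<in> S a"
  have deg: "degenerate_at lam n a j" if "0 < j" "j \<le> n" for j
    using none[of j] that unfolding nondegenerate_at_def by auto
  have a0: "a j = 0" if j: "j \<in> I" for j
    using all_deg_zero[of a j, OF deg] j by (simp add: ext0_def)
  have "g = \<one>\<^bsub>G\<^esub>"
  proof (rule ext)
    fix j
    show "g j = \<one>\<^bsub>G\<^esub> j"
    proof (cases "j \<in> I")
      case False
      have gc: "g \<in> carrier G" using g S_sub by blast
      then have "g j = undefined" using False unfolding in_G by blast
      then show ?thesis using False by (auto simp: one_G)
    next
      case True
      have gc: "g \<in> carrier G" using g S_sub by blast
      have r: "0 \<le> g j" "g j < P j" using gc True unfolding in_G by blast+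
      have "int p ^ (lam j - a j) dvd g j" using g True unfolding S_def by blast
      then have "P j dvd g j" using a0[OF True] by simp
      then have "g j = 0" using r small_dvd[of "P j" "g j"] by simp
      then show ?thesis using True by (simp add: one_G)
    qed
  qed
  then show "g \<in> y" using subgroup.one_closed[OF char_sub[OF y]] by simp
qed

lemma two_case:
  assumes can: "canonical lam n a" and ndi: "nondegenerate_at lam n a i"
    and ndj: "nondegenerate_at lam n a j" and ij: "i \<noteq> j"
  shows "\<not> join_irreducible_in (char_subgroups G) (S a)"
proof -
  define y where "y = S (a(i := a i - 1))"
  define z where "z = S (a(j := a j - 1))"
  have i: "i \<in> I" using ndi unfolding nondegenerate_at_def by auto
  have yL: "y \<in> char_subgroups G" unfolding y_def using S_char[OF lower_canonical[OF can ndi]] .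
  have zL: "z \<in> char_subgroups G" unfolding z_def using S_char[OF lower_canonical[OF can ndj]] .
  have ys: "y \<subset> S a" unfolding y_def using lower_sub[OF can ndi] witness(1,2)[OF can ndi] by blast
  have zs: "z \<subset> S a" unfolding z_def using lower_sub[OF can ndj] witness(1,2)[OF can ndj] by blast
  have join: "is_join_in (char_subgroups G) y z (S a)"
    unfolding is_join_in_def
  proof (intro conjI ballI impI)
    show "S a \<in> char_subgroups G" using S_char[OF can] .
    show "y \<subseteq> S a" "z \<subseteq> S a" using ys zs by auto
  next
    fix w assume wL: "w \<in> char_subgroups G" and yz: "y \<subseteq> w \<and> z \<subseteq> w"
    have ws: "subgroup w G" using char_sub[OF wL] .
    show "S a \<subseteq> w"
    proof
      fix g assume g: "g \<in> S a"
      have gc: "g \<in> carrier G" using g S_sub by blast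
      have r: "\<And>k. k \<in> I \<Longrightarrow> 0 \<le> g k \<and> g k < P k" using gc in_G by blast
      have gu: "\<And>k. k \<notin> I \<Longrightarrow> g k = undefined" using gc in_G by blast
      have gd: "\<And>k. k \<in> I \<Longrightarrow> int p ^ (lam k - a k) dvd g k" using g unfolding S_def by blast
      define u where "u = (\<lambda>k\<in>I. if k = i then 0 else g k)"
      have uc: "u \<in> carrier G" unfolding in_G u_def using r P_pos by auto
      have uy: "u \<in> y" unfolding y_def S_def using uc gd by (auto simp: u_def)
      have vc: "E i (g i) \<in> carrier G" using E_carrier[OF i] r[OF i] by blast
      have vz: "E i (g i) \<in> z" unfolding z_def S_def using vc gd[OF i] ij i by (auto simp: E_def)
      have "g = u \<otimes>\<^bsub>G\<^esub> E i (g i)"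
      proof (rule ext)
        fix k show "g k = (u \<otimes>\<^bsub>G\<^esub> E i (g i)) k"
          using r gu by (cases "k \<in> I") (auto simp: mult_G u_def E_def)
      qed
      moreover have "u \<in> w" "E i (g i) \<in> w" using uy vz yz by auto
      ultimately show "g \<in> w" using subgroup.m_closed[OF ws] by metis
    qed
  qed
  show ?thesis unfolding join_irreducible_in_def using yL zL ys zs join by blast
qed

lemma one_case:
  assumes can: "canonical lam n a" and nd: "nondegenerate_at lam n a i"
    and uniq: "\<And>j. j \<noteq> i \<Longrightarrow> \<not> nondegenerate_at lam n a j"
  shows "join_irreducible_in (char_subgroups G) (S a)"
  unfolding join_irreducible_in_def
proof (intro conjI)
  show L: "S a \<in> char_subgroups G" using S_char[OF can] .
  show "\<not> (\<forall>y\<in>char_subgroups G. S a \<subseteq> y)"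
    using triv_char witness(1,3)[OF can nd] by blast
  define M where "M = S (a(i := a i - 1))"
  have Mc: "M \<in> char_subgroups G" unfolding M_def using S_char[OF lower_canonical[OF can nd]] .
  have sub: "y \<subseteq> M" if yL: "y \<in> char_subgroups G" and ys: "y \<subset> S a" for y
  proof
    fix g assume g: "g \<in> y"
    have gS: "g \<in> S a" using g ys by blast
    show "g \<in> M"
    proof (rule ccontr)
      assume "g \<notin> M"
      then have "\<not> int p ^ (lam i - a i + 1) dvd g i" using lower_mem[OF can nd gS] unfolding M_def by blast
      then have "S a \<subseteq> y" using key[OF can nd uniq yL _ g] ys by blast
      then show False using ys by blast
    qed
  qed
  show "\<not> (\<exists>y\<in>char_subgroups G. \<exists>z\<in>char_subgroups G. y \<subset> S a \<and> z \<subset> S a \<and>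
          is_join_in (char_subgroups G) y z (S a))"
  proof
    assume "\<exists>y\<in>char_subgroups G. \<exists>z\<in>char_subgroups G. y \<subset> S a \<and> z \<subset> S a \<and>
          is_join_in (char_subgroups G) y z (S a)"
    then obtain y z where yL: "y \<in> char_subgroups G" and zL: "z \<in> char_subgroups G"
      and ys: "y \<subset> S a" and zs: "z \<subset> S a" and j: "is_join_in (char_subgroups G) y z (S a)"
      by blast
    have "y \<subseteq> M" "z \<subseteq> M" using sub yL ys zL zs by auto
    then have "S a \<subseteq> M" using j Mc unfolding is_join_in_def by blast
    then show False using witness(1,2)[OF can nd] unfolding M_def by blast
  qed
qed

end

theorem mainTheorem15:
  fixes p n :: nat and lam a :: "nat \<Rightarrow> nat"
  assumes "Factorial_Ring.prime p" and "p \<noteq> 2"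
    and "n \<ge> 1"
    and "0 < lam 1"
    and "\<forall>i\<in>{1..<n}. lam i < lam (i + 1)"
    and "canonical lam n a"
  shows "join_irreducible_in (char_subgroups (Gp p lam n)) (Rset p lam n a) \<longleftrightarrow>
         (\<exists>!i. nondegenerate_at lam n a i)"
proof -
  interpret pset p n lam using assms(1-5) by (unfold_locales) auto
  have can: "canonical lam n a" by fact
  have R: "Rset p lam n a = S a" using Rset_eq can unfolding canonical_def by blast
  show ?thesis
  proof
    assume ji: "join_irreducible_in (char_subgroups (Gp p lam n)) (Rset p lam n a)"
    show "\<exists>!i. nondegenerate_at lam n a i"
    proof (rule ccontr)
      assume nu: "\<not> (\<exists>!i. nondegenerate_at lam n a i)"
      show False
      proof (cases "\<exists>i. nondegenerate_at lam n a i")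
        case False
        then have "\<forall>y\<in>char_subgroups G. S a \<subseteq> y" using zero_case[OF can] by blast
        then show False using ji R unfolding join_irreducible_in_def by simp
      next
        case True
        then obtain i j where a1: "nondegenerate_at lam n a i" and a2: "nondegenerate_at lam n a j"
          and a3: "i \<noteq> j"
          using nu by blast
        have "\<not> join_irreducible_in (char_subgroups G) (S a)" using two_case[OF can a1 a2 a3] .
        then show False using ji R by simp
      qed
    qed
  next
    assume "\<exists>!i. nondegenerate_at lam n a i"
    then obtain i where nd: "nondegenerate_at lam n a i" and u: "\<And>j. j \<noteq> i \<Longrightarrow> \<not> nondegenerate_at lam n a j"
      by blast
    show "join_irreducible_in (char_subgroups (Gp p lam n)) (Rset p lam n a)"
      using one_case[OF can nd u] R by simp
  qed
qed



end
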